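(* Let $P_k\ge 1$, $\mu>0$, $\beta>0$, $s_k>0$ and $\nu=(\nu_1,\dots,\nu_{P_k})^\top\in\mathbb{R}^{P_k}$. Consider $$\min_{x\in\mathbb{R}^{P_k},\ x\ge 0}\ \ -U_k\Big(\sum_{i=1}^{P_k}x_i\Big)+\frac{\mu}{2}\|x-\nu\|_2^2 .$$ Then this problem has a unique minimizer $x^\star$, given by $x^\star_i=\max(0,\nu_i+\zeta)$ for all $i$, where $\zeta$ is the unique positive number such that $\sum_{i}\max(0,\nu_i+\zeta)>0$ and $$\mu\zeta=U_k'\Big(\sum_{i=1}^{P_k}\max(0,\nu_i+\zeta)\Big).$$ Moreover, suppose (after relabeling) $\nu_1\ge\nu_2\ge\dots\ge\nu_{P_k}$, and use the convention $U_k'(0)=+\infty$. If there is a smallest index $i'\in\{2,\dots,P_k\}$ such that $\zeta_0:=-\nu_{i'}>0$ and $\mu\zeta_0\ge U_k'\big(\sum_{i=1}^{P_k}\max(0,\nu_i+\zeta_0)\big)$, then $\zeta$ is the largest real root of the cubic equation $$\mu\zeta\Big(\sum_{i=1}^{i'-1}(\nu_i+\zeta)\Big)^2=\beta\sum_{i=1}^{i'-1}(\nu_i+\zeta)+s_k ;$$ otherwise $\zeta$ is the largest real root of the cubic equation $$\mu\zeta\Big(\sum_{i=1}^{P_k}(\nu_i+\zeta)\Big)^2=\beta\sum_{i=1}^{P_k}(\nu_i+\zeta)+s_k .$$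
   Context: $U_k(u)=\beta\log u-\frac{s_k}{u}$ for $u>0$ (so $U_k'(u)=\frac{\beta}{u}+\frac{s_k}{u^2}$), and $-U_k(0)$ is taken to be $+\infty$, so that the objective equals $+\infty$ at $x=0$. *)

theory Defs
  imports Complex_Main "HOL-Library.Extended_Real"
begin

definition U :: "real \<Rightarrow> real \<Rightarrow> real \<Rightarrow> real" where
  "U \<beta> s u = \<beta> * ln u - s / u"

definition dU :: "real \<Rightarrow> real \<Rightarrow> real \<Rightarrow> ereal" where
  "dU \<beta> s u = (if u = 0 then \<infinity> else ereal (\<beta> / u + s / u\<^sup>2))"

text \<open>Vectors of R^{P_k} are encoded as functions nat => real, supported on {1..n}.\<close>
definition feasible :: "nat \<Rightarrow> (nat \<Rightarrow> real) \<Rightarrow> bool" where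
  "feasible n x \<longleftrightarrow> (\<forall>i\<in>{1..n}. 0 \<le> x i) \<and> (\<forall>i. i \<notin> {1..n} \<longrightarrow> x i = 0)"

definition obj :: "real \<Rightarrow> real \<Rightarrow> real \<Rightarrow> nat \<Rightarrow> (nat \<Rightarrow> real) \<Rightarrow> (nat \<Rightarrow> real) \<Rightarrow> ereal" where
  "obj \<beta> s \<mu> n \<nu> x =
     (if (\<Sum>i=1..n. x i) = 0 then \<infinity>
      else ereal (- U \<beta> s (\<Sum>i=1..n. x i) + \<mu> / 2 * (\<Sum>i=1..n. (x i - \<nu> i)\<^sup>2)))"

definition is_minimizer :: "real \<Rightarrow> real \<Rightarrow> real \<Rightarrow> nat \<Rightarrow> (nat \<Rightarrow> real) \<Rightarrow> (nat \<Rightarrow> real) \<Rightarrow> bool" where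
  "is_minimizer \<beta> s \<mu> n \<nu> x \<longleftrightarrow>
     feasible n x \<and> (\<forall>y. feasible n y \<longrightarrow> obj \<beta> s \<mu> n \<nu> x \<le> obj \<beta> s \<mu> n \<nu> y)"

definition Ssum :: "nat \<Rightarrow> (nat \<Rightarrow> real) \<Rightarrow> real \<Rightarrow> real" where
  "Ssum n \<nu> z = (\<Sum>i=1..n. max 0 (\<nu> i + z))"

definition cubic_root :: "real \<Rightarrow> real \<Rightarrow> real \<Rightarrow> (nat \<Rightarrow> real) \<Rightarrow> nat \<Rightarrow> real \<Rightarrow> bool" where
  "cubic_root \<beta> s \<mu> \<nu> m z \<longleftrightarrow>
     \<mu> * z * (\<Sum>i=1..m. \<nu> i + z)\<^sup>2 = \<beta> * (\<Sum>i=1..m. \<nu> i + z) + s"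

definition largest_cubic_root :: "real \<Rightarrow> real \<Rightarrow> real \<Rightarrow> (nat \<Rightarrow> real) \<Rightarrow> nat \<Rightarrow> real \<Rightarrow> bool" where
  "largest_cubic_root \<beta> s \<mu> \<nu> m z \<longleftrightarrow>
     cubic_root \<beta> s \<mu> \<nu> m z \<and> (\<forall>w. cubic_root \<beta> s \<mu> \<nu> m w \<longrightarrow> w \<le> z)"

definition idx_cond :: "real \<Rightarrow> real \<Rightarrow> real \<Rightarrow> nat \<Rightarrow> (nat \<Rightarrow> real) \<Rightarrow> nat \<Rightarrow> bool" where
  "idx_cond \<beta> s \<mu> n \<nu> i \<longleftrightarrow>
     - \<nu> i > 0 \<and> ereal (\<mu> * (- \<nu> i)) \<ge> dU \<beta> s (Ssum n \<nu> (- \<nu> i))"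

end

theory Submission imports Defs begin
lemma S_nonneg: "0 \<le> Ssum n \<nu> z"
  unfolding Ssum_def by (intro sum_nonneg) simp

lemma S_mono: "z \<le> w \<Longrightarrow> Ssum n \<nu> z \<le> Ssum n \<nu> w"
  unfolding Ssum_def by (intro sum_mono) simp

lemma G_anti:
  fixes u v \<beta> s :: real
  assumes "0 < u" "u \<le> v" "\<beta> > 0" "s > 0"
  shows "\<beta>/v + s/v\<^sup>2 \<le> \<beta>/u + s/u\<^sup>2"
proof -
  have "\<beta>/v \<le> \<beta>/u" using assms by (intro divide_left_mono) auto
  moreover have "u\<^sup>2 \<le> v\<^sup>2" using assms by (intro power_mono) auto
  hence "s/v\<^sup>2 \<le> s/u\<^sup>2" using assms by (intro divide_left_mono) auto
  ultimately show ?thesis by simp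
qed

lemma tangent:
  fixes u v \<beta> s :: real
  assumes "0 < u" "0 < v" "\<beta> > 0" "s > 0"
  shows "- U \<beta> s v \<ge> - U \<beta> s u - (\<beta>/u + s/u\<^sup>2) * (v - u)"
proof -
  have "ln (v/u) \<le> v/u - 1" using assms by (intro ln_le_minus_one) auto
  hence l: "ln v - ln u \<le> (v - u)/u" using assms by (simp add: ln_div diff_divide_distrib)
  hence l2: "\<beta> * (ln v - ln u) \<le> \<beta> * ((v - u)/u)" using assms by (intro mult_left_mono) auto
  have e: "1/v - 1/u + (v-u)/u\<^sup>2 = (v-u)\<^sup>2/(u\<^sup>2*v)" using assms
    by (simp add: field_simps power2_eq_square)
  have "(v-u)\<^sup>2/(u\<^sup>2*v) \<ge> 0" using assms by simp
  hence "s * (1/v - 1/u + (v-u)/u\<^sup>2) \<ge> 0" using assms e by simp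
  hence r: "s/v - s/u + s*(v-u)/u\<^sup>2 \<ge> 0" by (simp add: algebra_simps)
  show ?thesis using l2 r unfolding U_def by (simp add: algebra_simps)
qed

lemma quad_i:
  fixes y v z :: real
  assumes "0 \<le> y" "0 < z"
  shows "(y - v)\<^sup>2 \<ge> (max 0 (v + z) - v)\<^sup>2 + 2*z*(y - max 0 (v+z)) + (y - max 0 (v+z))\<^sup>2"
proof (cases "v + z \<ge> 0")
  case True thus ?thesis by (simp add: max_def power2_eq_square algebra_simps)
next
  case False
  hence m: "max 0 (v+z) = 0" by simp
  have "(-v)*y \<ge> z*y" using False assms by (intro mult_right_mono) auto
  thus ?thesis using m by (simp add: power2_eq_square algebra_simps)
qed

lemma key_ineq:
  fixes n :: nat and \<mu> \<beta> s z :: real and \<nu> y :: "nat \<Rightarrow> real"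
  assumes "\<mu> > 0" "\<beta> > 0" "s > 0" "z > 0" "Ssum n \<nu> z > 0"
    and eq: "\<mu> * z = \<beta> / Ssum n \<nu> z + s / (Ssum n \<nu> z)\<^sup>2"
    and y: "\<forall>i\<in>{1..n}. 0 \<le> y i" and ypos: "(\<Sum>i=1..n. y i) > 0"
  shows "- U \<beta> s (\<Sum>i=1..n. y i) + \<mu>/2 * (\<Sum>i=1..n. (y i - \<nu> i)\<^sup>2)
       \<ge> - U \<beta> s (Ssum n \<nu> z) + \<mu>/2 * (\<Sum>i=1..n. (max 0 (\<nu> i + z) - \<nu> i)\<^sup>2)
         + \<mu>/2 * (\<Sum>i=1..n. (y i - max 0 (\<nu> i + z))\<^sup>2)"
proof -
  define x where "x = (\<lambda>i. max 0 (\<nu> i + z))"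
  let ?S = "Ssum n \<nu> z" and ?Y = "\<Sum>i=1..n. y i"
  have Sx: "?S = (\<Sum>i=1..n. x i)" unfolding Ssum_def x_def ..
  have "(\<Sum>i=1..n. (y i - \<nu> i)\<^sup>2) \<ge> (\<Sum>i=1..n. (x i - \<nu> i)\<^sup>2 + 2*z*(y i - x i) + (y i - x i)\<^sup>2)"
    using y assms(4) unfolding x_def by (intro sum_mono quad_i) auto
  also have "(\<Sum>i=1..n. (x i - \<nu> i)\<^sup>2 + 2*z*(y i - x i) + (y i - x i)\<^sup>2)
      = (\<Sum>i=1..n. (x i - \<nu> i)\<^sup>2) + 2*z*(?Y - ?S) + (\<Sum>i=1..n. (y i - x i)\<^sup>2)"
  proof -
    have "(\<Sum>i=1..n. 2*z*(y i - x i)) = 2*z*(?Y - ?S)"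
      by (simp add: Sx sum_distrib_left[symmetric] sum_subtractf)
    thus ?thesis by (simp add: sum.distrib)
  qed
  finally have q: "(\<Sum>i=1..n. (y i - \<nu> i)\<^sup>2) \<ge> (\<Sum>i=1..n. (x i - \<nu> i)\<^sup>2) + 2*z*(?Y - ?S) + (\<Sum>i=1..n. (y i - x i)\<^sup>2)" .
  have t: "- U \<beta> s ?Y \<ge> - U \<beta> s ?S - \<mu> * z * (?Y - ?S)"
    using tangent[of ?S ?Y \<beta> s] assms eq by simp
  from q have "\<mu>/2 * (\<Sum>i=1..n. (y i - \<nu> i)\<^sup>2) \<ge> \<mu>/2 * ((\<Sum>i=1..n. (x i - \<nu> i)\<^sup>2) + 2*z*(?Y - ?S) + (\<Sum>i=1..n. (y i - x i)\<^sup>2))"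
    using assms(1) by (intro mult_left_mono) auto
  then show ?thesis using t unfolding x_def by (simp add: algebra_simps)
qed

lemma largest:
  fixes \<mu> \<beta> s z w :: real and m :: nat
  assumes "m \<ge> 1" "\<mu> > 0" "\<beta> > 0" "s > 0"
    and cz: "cubic_root \<beta> s \<mu> \<nu> m z" and Tz: "(\<Sum>i=1..m. \<nu> i + z) > 0"
    and cw: "cubic_root \<beta> s \<mu> \<nu> m w"
  shows "w \<le> z"
proof (rule ccontr)
  assume "\<not> w \<le> z" hence wz: "z < w" by simp
  define a where "a = (\<Sum>i=1..m. \<nu> i + z)"
  define b where "b = (\<Sum>i=1..m. \<nu> i + w)"
  have ea: "a = (\<Sum>i=1..m. \<nu> i) + real m * z" unfolding a_def by (simp add: sum.distrib)
  have eb: "b = (\<Sum>i=1..m. \<nu> i) + real m * w" unfolding b_def by (simp add: sum.distrib)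
  have "real m * z < real m * w" using assms wz by simp
  hence ab: "a < b" using ea eb by simp
  have a0: "a > 0" using Tz a_def by simp
  have ca: "\<mu> * z * a\<^sup>2 = \<beta> * a + s" using cz unfolding cubic_root_def a_def by simp
  have cb: "\<mu> * w * b\<^sup>2 = \<beta> * b + s" using cw unfolding cubic_root_def b_def by simp
  have "\<mu> * z * a\<^sup>2 > 0" using ca a0 assms by (simp add: add_pos_pos)
  hence z0: "z > 0" using assms a0 by (simp add: zero_less_mult_iff)
  have "\<mu> * z * a * a = \<beta> * a + s" using ca by (simp add: power2_eq_square algebra_simps)
  hence "\<mu> * z * a = \<beta> + s / a" using a0 by (simp add: field_simps)
  hence "\<mu> * z * a > \<beta>" using assms a0 by simp
  moreover have "\<mu> * z * b > \<mu> * z * a" using ab z0 assms by simp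
  moreover have "\<mu> * z * a > 0" using a0 z0 assms by simp
  ultimately have h: "\<mu> * z * (a + b) > \<beta>" by (simp add: algebra_simps)
  have "\<mu> * z * b\<^sup>2 - \<beta> * b - s = (b - a) * (\<mu> * z * (a + b) - \<beta>)"
    using ca by (simp add: power2_eq_square algebra_simps)
  also have "... > 0" using ab h by simp
  finally have "\<mu> * z * b\<^sup>2 > \<beta> * b + s" by simp
  moreover have "\<mu> * w * b\<^sup>2 > \<mu> * z * b\<^sup>2" using wz assms ab a0 by simp
  ultimately show False using cb by simp
qed
theorem lemma1:
  fixes n :: nat and \<mu> \<beta> s :: real and \<nu> :: "nat \<Rightarrow> real"
  assumes "n \<ge> 1" and "\<mu> > 0" and "\<beta> > 0" and "s > 0"
  shows "\<exists>\<zeta>.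
     (\<zeta> > 0 \<and> Ssum n \<nu> \<zeta> > 0 \<and> ereal (\<mu> * \<zeta>) = dU \<beta> s (Ssum n \<nu> \<zeta>)) \<and>
     (\<forall>\<zeta>'. \<zeta>' > 0 \<and> Ssum n \<nu> \<zeta>' > 0 \<and> ereal (\<mu> * \<zeta>') = dU \<beta> s (Ssum n \<nu> \<zeta>') \<longrightarrow> \<zeta>' = \<zeta>) \<and>
     (\<forall>x. is_minimizer \<beta> s \<mu> n \<nu> x \<longleftrightarrow>
          x = (\<lambda>i. if i \<in> {1..n} then max 0 (\<nu> i + \<zeta>) else 0)) \<and>
     ((\<forall>i j. 1 \<le> i \<and> i \<le> j \<and> j \<le> n \<longrightarrow> \<nu> j \<le> \<nu> i) \<longrightarrow>
        ((\<exists>i\<in>{2..n}. idx_cond \<beta> s \<mu> n \<nu> i) \<longrightarrow>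
            largest_cubic_root \<beta> s \<mu> \<nu> ((LEAST i. i \<in> {2..n} \<and> idx_cond \<beta> s \<mu> n \<nu> i) - 1) \<zeta>) \<and>
        (\<not> (\<exists>i\<in>{2..n}. idx_cond \<beta> s \<mu> n \<nu> i) \<longrightarrow>
            largest_cubic_root \<beta> s \<mu> \<nu> n \<zeta>))"
proof -
  note pos = assms(2,3,4)
  define S where "S = Ssum n \<nu>"
  define f where "f z = \<mu> * z * (S z)\<^sup>2 - \<beta> * S z - s" for z
  have Snn: "\<And>z. S z \<ge> 0" unfolding S_def by (rule S_nonneg)
  have Smono: "\<And>z w. z \<le> w \<Longrightarrow> S z \<le> S w" unfolding S_def by (rule S_mono)
  have dU_pos: "\<And>u. u > 0 \<Longrightarrow> dU \<beta> s u = ereal (\<beta>/u + s/u\<^sup>2)" unfolding dU_def by simp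
  have Qiff: "(z > 0 \<and> S z > 0 \<and> ereal (\<mu> * z) = dU \<beta> s (S z)) \<longleftrightarrow>
              (z > 0 \<and> S z > 0 \<and> \<mu> * z = \<beta> / S z + s / (S z)\<^sup>2)" for z
    using dU_pos by auto
  define b where "b = 1 + \<bar>\<nu> 1\<bar> + (\<beta>+s)/\<mu>"
  have b0: "b \<ge> 0" unfolding b_def using pos by simp
  have contf: "continuous_on {0..b} f" unfolding f_def S_def Ssum_def
    by (intro continuous_intros)
  have "\<beta> * S 0 \<ge> 0" using Snn[of 0] pos by simp
  hence f0: "f 0 \<le> 0" using pos by (simp add: f_def)
  have fb: "0 \<le> f b"
  proof -
    have "max 0 (\<nu> 1 + b) \<le> S b" unfolding S_def Ssum_def
      using assms(1) by (intro member_le_sum) auto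
    moreover have "\<nu> 1 + b \<ge> 1" unfolding b_def using pos
      by (smt (verit) abs_ge_minus_self divide_pos_pos)
    ultimately have S1: "S b \<ge> 1" by simp
    have "\<mu> * b = \<mu> * (1 + \<bar>\<nu> 1\<bar>) + (\<beta> + s)" unfolding b_def using pos
      by (simp add: field_simps)
    hence "\<mu> * b \<ge> \<beta> + s" using pos by simp
    hence A: "\<mu> * b * (S b)\<^sup>2 \<ge> (\<beta> + s) * (S b)\<^sup>2" by (intro mult_right_mono) auto
    have "(S b)\<^sup>2 \<ge> S b" using S1 by (simp add: power2_eq_square)
    hence sq1: "(S b)\<^sup>2 \<ge> 1" "(S b)\<^sup>2 \<ge> S b" using S1 by auto
    hence "\<beta> * (S b)\<^sup>2 \<ge> \<beta> * S b" using pos by (intro mult_left_mono) auto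
    moreover have "s * (S b)\<^sup>2 \<ge> s * 1" using pos sq1
      by (intro mult_left_mono) auto
    ultimately show ?thesis using A unfolding f_def by (simp add: algebra_simps)
  qed
  obtain z where z0b: "0 \<le> z" "z \<le> b" and fz: "f z = 0"
    using IVT'[of f 0 0 b] f0 fb b0 contf by auto
  have Sz: "S z > 0"
  proof (rule ccontr)
    assume "\<not> S z > 0" hence "S z = 0" using Snn[of z] by simp
    thus False using fz pos by (simp add: f_def)
  qed
  have zpos: "z > 0"
  proof (rule ccontr)
    assume "\<not> z > 0" hence "z \<le> 0" by simp
    hence "\<mu> * z * (S z)\<^sup>2 \<le> 0" using pos by (simp add: mult_nonneg_nonpos mult_nonpos_nonneg)
    moreover have "\<beta> * S z + s > 0" using pos Sz by (simp add: add_pos_pos)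
    ultimately show False using fz by (simp add: f_def)
  qed
  have eqz: "\<mu> * z = \<beta> / S z + s / (S z)\<^sup>2"
  proof -
    have "\<mu> * z * (S z)\<^sup>2 = \<beta> * S z + s" using fz by (simp add: f_def)
    thus ?thesis using Sz by (simp add: field_simps power2_eq_square)
  qed
  have uniq: "z' = z" if "z' > 0" "S z' > 0" "\<mu> * z' = \<beta> / S z' + s / (S z')\<^sup>2" for z'
  proof (rule ccontr)
    assume "z' \<noteq> z"
    then consider "z' < z" | "z < z'" by linarith
    then show False
    proof cases
      case 1
      have "\<beta> / S z + s / (S z)\<^sup>2 \<le> \<beta> / S z' + s / (S z')\<^sup>2"
        using G_anti[of "S z'" "S z" \<beta> s] that Smono[of z' z] 1 pos by simp
      moreover have "\<mu> * z' < \<mu> * z" using 1 pos by simp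
      ultimately show False using that eqz by simp
    next
      case 2
      have "\<beta> / S z' + s / (S z')\<^sup>2 \<le> \<beta> / S z + s / (S z)\<^sup>2"
        using G_anti[of "S z" "S z'" \<beta> s] Sz Smono[of z z'] 2 pos by simp
      moreover have "\<mu> * z < \<mu> * z'" using 2 pos by simp
      ultimately show False using that eqz by simp
    qed
  qed
  define xs where "xs = (\<lambda>i. if i \<in> {1..n} then max 0 (\<nu> i + z) else 0)"
  have fxs: "feasible n xs" unfolding feasible_def xs_def by auto
  have sxs: "(\<Sum>i=1..n. xs i) = S z" unfolding xs_def S_def Ssum_def
    by (intro sum.cong) auto
  have sq: "(\<Sum>i=1..n. (xs i - \<nu> i)\<^sup>2) = (\<Sum>i=1..n. (max 0 (\<nu> i + z) - \<nu> i)\<^sup>2)"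
    unfolding xs_def by (intro sum.cong) auto
  have objx: "obj \<beta> s \<mu> n \<nu> xs = ereal (- U \<beta> s (S z) + \<mu>/2 * (\<Sum>i=1..n. (max 0 (\<nu> i + z) - \<nu> i)\<^sup>2))"
    unfolding obj_def using sxs sq Sz by simp
  have main: "obj \<beta> s \<mu> n \<nu> y \<ge> ereal (- U \<beta> s (S z) + \<mu>/2 * (\<Sum>i=1..n. (max 0 (\<nu> i + z) - \<nu> i)\<^sup>2)
         + \<mu>/2 * (\<Sum>i=1..n. (y i - max 0 (\<nu> i + z))\<^sup>2))"
    if fy: "feasible n y" and ys: "(\<Sum>i=1..n. y i) \<noteq> 0" for y
  proof -
    have yn: "\<forall>i\<in>{1..n}. 0 \<le> y i" using fy unfolding feasible_def by auto
    hence "(\<Sum>i=1..n. y i) \<ge> 0" by (intro sum_nonneg) auto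
    hence ypos: "(\<Sum>i=1..n. y i) > 0" using ys by simp
    have "- U \<beta> s (\<Sum>i=1..n. y i) + \<mu>/2 * (\<Sum>i=1..n. (y i - \<nu> i)\<^sup>2)
       \<ge> - U \<beta> s (Ssum n \<nu> z) + \<mu>/2 * (\<Sum>i=1..n. (max 0 (\<nu> i + z) - \<nu> i)\<^sup>2)
         + \<mu>/2 * (\<Sum>i=1..n. (y i - max 0 (\<nu> i + z))\<^sup>2)"
      using key_ineq[of \<mu> \<beta> s z n \<nu> y] pos zpos Sz eqz yn ypos unfolding S_def by simp
    thus ?thesis unfolding obj_def S_def using ys by simp
  qed
  have minim: "is_minimizer \<beta> s \<mu> n \<nu> x \<longleftrightarrow> x = xs" for x
  proof
    assume "x = xs"
    moreover have "obj \<beta> s \<mu> n \<nu> xs \<le> obj \<beta> s \<mu> n \<nu> y" if fy: "feasible n y" for y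
    proof (cases "(\<Sum>i=1..n. y i) = 0")
      case True thus ?thesis unfolding obj_def[of _ _ _ _ _ y] by simp
    next
      case False
      have "0 \<le> \<mu>/2 * (\<Sum>i=1..n. (y i - max 0 (\<nu> i + z))\<^sup>2)" using pos
        by (intro mult_nonneg_nonneg sum_nonneg) auto
      hence "obj \<beta> s \<mu> n \<nu> xs \<le> ereal (- U \<beta> s (S z) + \<mu>/2 * (\<Sum>i=1..n. (max 0 (\<nu> i + z) - \<nu> i)\<^sup>2)
         + \<mu>/2 * (\<Sum>i=1..n. (y i - max 0 (\<nu> i + z))\<^sup>2))" unfolding objx by simp
      also have "... \<le> obj \<beta> s \<mu> n \<nu> y" using main[OF fy False] .
      finally show ?thesis .
    qed
    ultimately show "is_minimizer \<beta> s \<mu> n \<nu> x" unfolding is_minimizer_def using fxs by auto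
  next
    assume m: "is_minimizer \<beta> s \<mu> n \<nu> x"
    hence fx: "feasible n x" and le: "obj \<beta> s \<mu> n \<nu> x \<le> obj \<beta> s \<mu> n \<nu> xs"
      unfolding is_minimizer_def using fxs by auto
    have xs0: "(\<Sum>i=1..n. x i) \<noteq> 0"
    proof
      assume "(\<Sum>i=1..n. x i) = 0"
      hence "obj \<beta> s \<mu> n \<nu> x = \<infinity>" unfolding obj_def by simp
      thus False using le objx by simp
    qed
    have "ereal (- U \<beta> s (S z) + \<mu>/2 * (\<Sum>i=1..n. (max 0 (\<nu> i + z) - \<nu> i)\<^sup>2)
         + \<mu>/2 * (\<Sum>i=1..n. (x i - max 0 (\<nu> i + z))\<^sup>2)) \<le> ereal (- U \<beta> s (S z) + \<mu>/2 * (\<Sum>i=1..n. (max 0 (\<nu> i + z) - \<nu> i)\<^sup>2))"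
      using order_trans[OF main[OF fx xs0] le] unfolding objx .
    hence "\<mu>/2 * (\<Sum>i=1..n. (x i - max 0 (\<nu> i + z))\<^sup>2) \<le> 0" by simp
    hence "(\<Sum>i=1..n. (x i - max 0 (\<nu> i + z))\<^sup>2) \<le> 0" using pos
      by (simp add: mult_le_0_iff)
    moreover have "(\<Sum>i=1..n. (x i - max 0 (\<nu> i + z))\<^sup>2) \<ge> 0" by (intro sum_nonneg) auto
    ultimately have "(\<Sum>i=1..n. (x i - max 0 (\<nu> i + z))\<^sup>2) = 0" by simp
    hence "\<forall>i\<in>{1..n}. (x i - max 0 (\<nu> i + z))\<^sup>2 = 0"
      by (subst (asm) sum_nonneg_eq_0_iff) auto
    hence "\<forall>i\<in>{1..n}. x i = max 0 (\<nu> i + z)" by simp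
    moreover have "\<forall>i. i \<notin> {1..n} \<longrightarrow> x i = 0" using fx unfolding feasible_def by simp
    ultimately show "x = xs" unfolding xs_def by (intro ext) auto
  qed
  have cubic: "((\<exists>i\<in>{2..n}. idx_cond \<beta> s \<mu> n \<nu> i) \<longrightarrow>
            largest_cubic_root \<beta> s \<mu> \<nu> ((LEAST i. i \<in> {2..n} \<and> idx_cond \<beta> s \<mu> n \<nu> i) - 1) z) \<and>
        (\<not> (\<exists>i\<in>{2..n}. idx_cond \<beta> s \<mu> n \<nu> i) \<longrightarrow>
            largest_cubic_root \<beta> s \<mu> \<nu> n z)"
    if sorted: "\<forall>i j. 1 \<le> i \<and> i \<le> j \<and> j \<le> n \<longrightarrow> \<nu> j \<le> \<nu> i"
  proof -
    have one: "\<nu> 1 + z \<ge> 0"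
    proof (rule ccontr)
      assume "\<not> \<nu> 1 + z \<ge> 0"
      hence "\<forall>i\<in>{1..n}. max 0 (\<nu> i + z) = 0" using sorted by force
      hence "S z = 0" unfolding S_def Ssum_def by simp
      thus False using Sz by simp
    qed
    have K: "idx_cond \<beta> s \<mu> n \<nu> i" if "i \<in> {1..n}" "\<nu> i + z < 0" for i
    proof -
      have zl: "z < - \<nu> i" using that by simp
      have S2: "S (- \<nu> i) > 0" using Smono[of z "- \<nu> i"] zl Sz by simp
      have "\<beta> / S (-\<nu> i) + s / (S (-\<nu> i))\<^sup>2 \<le> \<beta> / S z + s / (S z)\<^sup>2"
        using G_anti[of "S z" "S (-\<nu> i)" \<beta> s] Sz Smono[of z "- \<nu> i"] zl pos by simp
      moreover have "\<mu> * z < \<mu> * (- \<nu> i)" using mult_strict_left_mono[OF zl pos(1)] .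
      ultimately have "\<mu> * (- \<nu> i) \<ge> \<beta> / S (-\<nu> i) + s / (S (-\<nu> i))\<^sup>2" using eqz by simp
      thus ?thesis unfolding idx_cond_def using zl zpos S2 dU_pos[of "S (- \<nu> i)"]
        unfolding S_def by simp
    qed
    have split: "S z = (\<Sum>i=1..m. \<nu> i + z)"
      if "1 \<le> m" "m \<le> n" "\<forall>i\<in>{1..m}. \<nu> i + z \<ge> 0" "\<forall>i\<in>{m+1..n}. \<nu> i + z \<le> 0" for m
    proof -
      have "S z = (\<Sum>i=1..m. max 0 (\<nu> i + z))" unfolding S_def Ssum_def
        using that by (intro sum.mono_neutral_right) auto
      also have "... = (\<Sum>i=1..m. \<nu> i + z)" using that by (intro sum.cong) auto
      finally show ?thesis .
    qed
    have lcr: "largest_cubic_root \<beta> s \<mu> \<nu> m z"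
      if "1 \<le> m" "S z = (\<Sum>i=1..m. \<nu> i + z)" for m
    proof -
      have c: "cubic_root \<beta> s \<mu> \<nu> m z" unfolding cubic_root_def
        using eqz Sz that(2) by (simp add: field_simps power2_eq_square)
      show ?thesis unfolding largest_cubic_root_def
        using c largest[OF that(1) pos c] Sz that(2) by auto
    qed
    show ?thesis
    proof (intro conjI impI)
      assume ex: "\<exists>i\<in>{2..n}. idx_cond \<beta> s \<mu> n \<nu> i"
      define m' where "m' = (LEAST i. i \<in> {2..n} \<and> idx_cond \<beta> s \<mu> n \<nu> i)"
      obtain i0 where i0: "i0 \<in> {2..n} \<and> idx_cond \<beta> s \<mu> n \<nu> i0" using ex by blast
      have m'p: "m' \<in> {2..n} \<and> idx_cond \<beta> s \<mu> n \<nu> m'" unfolding m'_def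
        by (rule LeastI[of "\<lambda>i. i \<in> {2..n} \<and> idx_cond \<beta> s \<mu> n \<nu> i" i0]) (rule i0)
      have m'le: "m' \<le> i" if "i \<in> {2..n}" "idx_cond \<beta> s \<mu> n \<nu> i" for i
        unfolding m'_def by (rule Least_le) (use that in blast)
      have zle: "z \<le> - \<nu> m'"
      proof (rule ccontr)
        assume "\<not> z \<le> - \<nu> m'" hence zg: "- \<nu> m' < z" by simp
        have ic: "- \<nu> m' > 0" "ereal (\<mu> * (- \<nu> m')) \<ge> dU \<beta> s (S (- \<nu> m'))"
          using m'p unfolding idx_cond_def S_def by auto
        have "S (- \<nu> m') \<noteq> 0" using ic(2) unfolding dU_def by auto
        hence S0: "S (- \<nu> m') > 0" using Snn[of "- \<nu> m'"] by simp
        have "\<mu> * (- \<nu> m') \<ge> \<beta> / S (-\<nu> m') + s / (S (-\<nu> m'))\<^sup>2" using ic(2) dU_pos[OF S0] by simp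
        moreover have "\<beta> / S z + s / (S z)\<^sup>2 \<le> \<beta> / S (-\<nu> m') + s / (S (-\<nu> m'))\<^sup>2"
          using G_anti[of "S (-\<nu> m')" "S z" \<beta> s] S0 Smono[of "- \<nu> m'" z] zg pos by simp
        moreover have "\<mu> * (- \<nu> m') < \<mu> * z" using mult_strict_left_mono[OF zg pos(1)] .
        ultimately show False using eqz by simp
      qed
      have A: "\<forall>i\<in>{1..m'-1}. \<nu> i + z \<ge> 0"
      proof
        fix i assume i: "i \<in> {1..m'-1}"
        show "\<nu> i + z \<ge> 0"
        proof (cases "i = 1")
          case True thus ?thesis using one by simp
        next
          case False
          show ?thesis
          proof (rule ccontr)
            assume "\<not> \<nu> i + z \<ge> 0"
            hence "idx_cond \<beta> s \<mu> n \<nu> i" using K[of i] i m'p by auto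
            hence "m' \<le> i" using m'le[of i] i False m'p by auto
            thus False using i m'p by auto
          qed
        qed
      qed
      have B: "\<forall>i\<in>{m'-1+1..n}. \<nu> i + z \<le> 0"
      proof
        fix i assume i: "i \<in> {m'-1+1..n}"
        hence "\<nu> i \<le> \<nu> m'" using sorted m'p by auto
        thus "\<nu> i + z \<le> 0" using zle by simp
      qed
      have "S z = (\<Sum>i=1..m'-1. \<nu> i + z)" using split[of "m'-1"] A B m'p by auto
      thus "largest_cubic_root \<beta> s \<mu> \<nu> ((LEAST i. i \<in> {2..n} \<and> idx_cond \<beta> s \<mu> n \<nu> i) - 1) z"
        using lcr[of "m'-1"] m'p unfolding m'_def by auto
    next
      assume nex: "\<not> (\<exists>i\<in>{2..n}. idx_cond \<beta> s \<mu> n \<nu> i)"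
      have A: "\<forall>i\<in>{1..n}. \<nu> i + z \<ge> 0"
      proof
        fix i assume i: "i \<in> {1..n}"
        show "\<nu> i + z \<ge> 0"
        proof (cases "i = 1")
          case True thus ?thesis using one by simp
        next
          case False
          show ?thesis
          proof (rule ccontr)
            assume "\<not> \<nu> i + z \<ge> 0"
            hence "\<nu> i + z < 0" by simp
            hence ic: "idx_cond \<beta> s \<mu> n \<nu> i" using K i by blast
            have "i \<in> {2..n}" using i False by auto
            thus False using nex ic by blast
          qed
        qed
      qed
      have "S z = (\<Sum>i=1..n. \<nu> i + z)" by (rule split) (use A assms(1) in auto)
      thus "largest_cubic_root \<beta> s \<mu> \<nu> n z" by (rule lcr[OF assms(1)])
    qed
  qed
  show ?thesis
    apply (rule exI[of _ z])
    using Qiff[of z] zpos Sz eqz Qiff uniq minim cubic unfolding S_def xs_def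
    by blast
qed
end
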